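(* Let $\lambda>0$ be a constant and $\mu(t,x,y)$ a $C^\infty$ function on an open set $V\subset\mathbb{R}^3$, and let $U\subset V$ be a connected open set on which $\mu\neq\lambda$. On $U$ define the Riemannian metric $$g = (\lambda-\mu(t,x,y))^{-2}\,dt^2 + \lambda\,dx^2 + \lambda\,dy^2$$ and the $(1,1)$ tensor $A$ by $A(\partial_t)=\mu(t,x,y)\,\partial_t$, $A(\partial_x)=\lambda\,\partial_x$, $A(\partial_y)=\lambda\,\partial_y$. Then $A$ is a Codazzi tensor for $g$.
   Context: A symmetric $(1,1)$ tensor $A$ (self-adjoint with respect to $g$) is a Codazzi tensor if $(\nabla_X A)Y = (\nabla_Y A)X$ for all vector fields $X,Y$, where $\nabla$ is the Levi-Civita connection of $g$. *)

theory Defs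
  imports "HOL-Analysis.Analysis"
begin

text \<open>Coordinates on R^3 are indexed by the numeral type 3: index 0 is t, 1 is x, 2 is y.
  A point is p :: real^3; the coordinate vector field d_i is axis i 1.\<close>

definition partial :: "3 \<Rightarrow> (real^3 \<Rightarrow> real) \<Rightarrow> real^3 \<Rightarrow> real" where
  "partial i f p = deriv (\<lambda>s. f (p + s *\<^sub>R axis i 1)) 0"

fun Ck_on :: "nat \<Rightarrow> (real^3) set \<Rightarrow> (real^3 \<Rightarrow> real) \<Rightarrow> bool" where
  "Ck_on 0 V f = continuous_on V f"
| "Ck_on (Suc n) V f = (continuous_on V f \<and>
      (\<forall>i. \<forall>p\<in>V. (\<lambda>s. f (p + s *\<^sub>R axis i 1)) differentiable (at 0)) \<and>
      (\<forall>i. Ck_on n V (partial i f)))"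

definition smooth_on :: "(real^3) set \<Rightarrow> (real^3 \<Rightarrow> real) \<Rightarrow> bool" where
  "smooth_on V f \<longleftrightarrow> (\<forall>n. Ck_on n V f)"

text \<open>A metric is given by components g i j (g i j p = g(d_i, d_j) at p);
  a (1,1) tensor by components A i j with A(d_j) = sum_i A i j d_i.\<close>

definition metric_matrix :: "(3 \<Rightarrow> 3 \<Rightarrow> real^3 \<Rightarrow> real) \<Rightarrow> real^3 \<Rightarrow> real^3^3" where
  "metric_matrix g p = (\<chi> i j. g i j p)"

definition christoffel :: "(3 \<Rightarrow> 3 \<Rightarrow> real^3 \<Rightarrow> real) \<Rightarrow> 3 \<Rightarrow> 3 \<Rightarrow> 3 \<Rightarrow> real^3 \<Rightarrow> real" where
  "christoffel g i k l p = (1/2) * (\<Sum>m\<in>UNIV. matrix_inv (metric_matrix g p) $ i $ m *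
      (partial k (g m l) p + partial l (g m k) p - partial m (g k l) p))"

definition dirD :: "(real^3 \<Rightarrow> real^3) \<Rightarrow> (real^3 \<Rightarrow> real) \<Rightarrow> real^3 \<Rightarrow> real" where
  "dirD X f p = (\<Sum>k\<in>UNIV. X p $ k * partial k f p)"

definition covD :: "(3 \<Rightarrow> 3 \<Rightarrow> real^3 \<Rightarrow> real) \<Rightarrow> (real^3 \<Rightarrow> real^3) \<Rightarrow> (real^3 \<Rightarrow> real^3) \<Rightarrow> real^3 \<Rightarrow> real^3" where
  "covD g X Y p = (\<chi> i. dirD X (\<lambda>q. Y q $ i) p +
      (\<Sum>k\<in>UNIV. \<Sum>l\<in>UNIV. christoffel g i k l p * X p $ k * Y p $ l))"

definition applyT :: "(3 \<Rightarrow> 3 \<Rightarrow> real^3 \<Rightarrow> real) \<Rightarrow> real^3 \<Rightarrow> real^3 \<Rightarrow> real^3" where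
  "applyT A p v = (\<chi> i. \<Sum>j\<in>UNIV. A i j p * v $ j)"

definition covD_tensor :: "(3 \<Rightarrow> 3 \<Rightarrow> real^3 \<Rightarrow> real) \<Rightarrow> (3 \<Rightarrow> 3 \<Rightarrow> real^3 \<Rightarrow> real) \<Rightarrow>
    (real^3 \<Rightarrow> real^3) \<Rightarrow> (real^3 \<Rightarrow> real^3) \<Rightarrow> real^3 \<Rightarrow> real^3" where
  "covD_tensor g A X Y p = covD g X (\<lambda>q. applyT A q (Y q)) p - applyT A p (covD g X Y p)"

definition gform :: "(3 \<Rightarrow> 3 \<Rightarrow> real^3 \<Rightarrow> real) \<Rightarrow> real^3 \<Rightarrow> real^3 \<Rightarrow> real^3 \<Rightarrow> real" where
  "gform g p v w = (\<Sum>i\<in>UNIV. \<Sum>j\<in>UNIV. g i j p * v $ i * w $ j)"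

definition smooth_vf_on :: "(real^3) set \<Rightarrow> (real^3 \<Rightarrow> real^3) \<Rightarrow> bool" where
  "smooth_vf_on U X \<longleftrightarrow> (\<forall>k. smooth_on U (\<lambda>p. X p $ k))"

definition codazzi_tensor :: "(real^3) set \<Rightarrow> (3 \<Rightarrow> 3 \<Rightarrow> real^3 \<Rightarrow> real) \<Rightarrow> (3 \<Rightarrow> 3 \<Rightarrow> real^3 \<Rightarrow> real) \<Rightarrow> bool" where
  "codazzi_tensor U g A \<longleftrightarrow>
     (\<forall>p\<in>U. \<forall>v w. gform g p (applyT A p v) w = gform g p v (applyT A p w)) \<and>
     (\<forall>X Y. smooth_vf_on U X \<longrightarrow> smooth_vf_on U Y \<longrightarrow>
        (\<forall>p\<in>U. covD_tensor g A X Y p = covD_tensor g A Y X p))"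

end

theory Submission
  imports Defs
begin
lemma partial_eqI: "((\<lambda>s. f (p + s *\<^sub>R axis k 1)) has_real_derivative D) (at 0) \<Longrightarrow> partial k f p = D"
  by (simp add: partial_def DERIV_imp_deriv)
lemma partial_DERIV: "(\<lambda>s. f (p + s *\<^sub>R axis k 1)) differentiable (at 0) \<Longrightarrow>
   ((\<lambda>s. f (p + s *\<^sub>R axis k 1)) has_real_derivative partial k f p) (at 0)"
  unfolding partial_def using DERIV_deriv_iff_real_differentiable by blast
lemma partial_mult:
  fixes f h :: "real^3 \<Rightarrow> real"
  assumes "(\<lambda>s. f (p + s *\<^sub>R axis k 1)) differentiable (at 0)"
    "(\<lambda>s. h (p + s *\<^sub>R axis k 1)) differentiable (at 0)"
  shows "partial k (\<lambda>q. f q * h q) p = partial k f p * h p + f p * partial k h p"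
proof -
  have "((\<lambda>s. f (p + s *\<^sub>R axis k 1) * h (p + s *\<^sub>R axis k 1)) has_real_derivative
     partial k f p * h (p + 0 *\<^sub>R axis k 1) + partial k h p * f (p + 0 *\<^sub>R axis k 1)) (at 0)"
    by (rule DERIV_mult[OF partial_DERIV[OF assms(1)] partial_DERIV[OF assms(2)]])
  then show ?thesis by (intro partial_eqI) (simp add: algebra_simps)
qed
lemma partial_const: "partial k (\<lambda>q. c::real) p = 0"
  by (rule partial_eqI) simp
lemma partial_inv_sq:
  fixes f :: "real^3 \<Rightarrow> real"
  assumes "(\<lambda>s. f (p + s *\<^sub>R axis k 1)) differentiable (at 0)" "lam - f p \<noteq> 0"
  shows "partial k (\<lambda>q. 1 / (lam - f q)^2) p = 2 * partial k f p / (lam - f p)^3"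
proof (rule partial_eqI)
  have d: "((\<lambda>s. f (p + s *\<^sub>R axis k 1)) has_real_derivative partial k f p) (at 0)"
    by (rule partial_DERIV[OF assms(1)])
    define c where "c = lam - f p"
  have c: "c \<noteq> 0" "f p = lam - c" using assms(2) by (auto simp: c_def)
  show "((\<lambda>s. 1 / (lam - f (p + s *\<^sub>R axis k 1))^2) has_real_derivative 2 * partial k f p / (lam - f p)^3) (at 0)"
    using c by (auto intro!: derivative_eq_intros d simp: field_simps power2_eq_square power3_eq_cube)
qed
lemma sum_if_left: "(\<Sum>k\<in>(UNIV::'n::finite set). (if i = k then a else 0) * h k) = a * (h i :: real)"
proof -
  have "(\<Sum>k\<in>(UNIV::'n set). (if i = k then a else 0) * h k) = (\<Sum>k\<in>(UNIV::'n set). if k = i then a * h i else 0)"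
    by (rule sum.cong) auto
  also have "\<dots> = a * h i" by simp
  finally show ?thesis .
qed
lemma diag_inv:
  fixes d :: "'n::finite \<Rightarrow> real"
  assumes "\<And>i. d i \<noteq> 0"
  shows "matrix_inv (\<chi> i j. if i = j then d i else 0) = (\<chi> i j. if i = j then 1 / d i else 0)"
proof -
  let ?M = "(\<chi> i j. if i = j then d i else 0) :: real^'n^'n"
  let ?D = "(\<chi> i j. if i = j then 1 / d i else 0) :: real^'n^'n"
  have 1: "?M ** ?D = mat 1" "?D ** ?M = mat 1"
    using assms by (auto simp: matrix_matrix_mult_def mat_def vec_eq_iff sum_if_left)
  then have "?M ** matrix_inv ?M = mat 1 \<and> matrix_inv ?M ** ?M = mat 1"
    unfolding matrix_inv_def by (rule someI[where x = ?D, OF conjI])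
  then have "matrix_inv ?M = matrix_inv ?M ** (?M ** ?D)" using 1 by (simp add: matrix_mul_rid)
  also have "\<dots> = (matrix_inv ?M ** ?M) ** ?D" by (simp add: matrix_mul_assoc)
  also have "\<dots> = ?D" using \<open>?M ** matrix_inv ?M = mat 1 \<and> _\<close> by (simp add: matrix_mul_lid)
  finally show ?thesis .
qed

lemma exh3: "x = (0::3) \<or> x = 1 \<or> x = 2"
  using exhaust_3[of x] by auto
lemma sum3: "sum f (UNIV::3 set) = f 0 + f 1 + f 2"
proof -
  have "f 3 = f 0" by (rule arg_cong) simp
  then show ?thesis using sum_3[of f] by (simp add: ac_simps)
qed

lemma smooth_dif:
  assumes "smooth_on V f" "p \<in> V"
  shows "(\<lambda>s. f (p + s *\<^sub>R axis k 1)) differentiable (at 0)"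
proof -
  have "Ck_on (Suc 0) V f" using assms(1) unfolding smooth_on_def by blast
  then show ?thesis using assms(2) by simp
qed

theorem proposition4p1:
  fixes lam :: real and mu :: "real^3 \<Rightarrow> real" and V U :: "(real^3) set"
    and g A :: "3 \<Rightarrow> 3 \<Rightarrow> real^3 \<Rightarrow> real"
  assumes "lam > 0"
    and "open V" and "smooth_on V mu"
    and "open U" and "connected U" and "U \<subseteq> V"
    and "\<forall>p\<in>U. mu p \<noteq> lam"
    and "\<And>i j p. g i j p = (if i \<noteq> j then 0 else if i = 0 then 1 / (lam - mu p)^2 else lam)"
    and "\<And>i j p. A i j p = (if i \<noteq> j then 0 else if i = 0 then mu p else lam)"
  shows "codazzi_tensor U g A"
proof -
  have gdef: "g = (\<lambda>i j p. if i \<noteq> j then 0 else if i = 0 then 1 / (lam - mu p)^2 else lam)"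
    using assms(8) by (intro ext) auto
  have Adef: "A = (\<lambda>i j p. if i \<noteq> j then 0 else if i = 0 then mu p else lam)"
    using assms(9) by (intro ext) auto
  have appA: "applyT A q v $ i = (if i = 0 then mu q else lam) * v $ i" for q v i
    using exh3[of i] by (auto simp: applyT_def Adef sum3)
  have sym: "gform g p (applyT A p v) w = gform g p v (applyT A p w)" for p v w
    by (simp add: gform_def appA sum3 gdef algebra_simps)
  have cod: "covD_tensor g A X Y p = covD_tensor g A Y X p"
    if X: "smooth_vf_on U X" and Y: "smooth_vf_on U Y" and p: "p \<in> U" for X Y p
  proof -
    have pV: "p \<in> V" using p assms(6) by blast
    have mud: "(\<lambda>s. mu (p + s *\<^sub>R axis k 1)) differentiable (at 0)" for k
      by (rule smooth_dif[OF assms(3) pV])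
    have Yd: "(\<lambda>s. Y (p + s *\<^sub>R axis k 1) $ j) differentiable (at 0)" for k j
      using smooth_dif[of U "\<lambda>q. Y q $ j" p k] Y p unfolding smooth_vf_on_def by blast
    have Xd: "(\<lambda>s. X (p + s *\<^sub>R axis k 1) $ j) differentiable (at 0)" for k j
      using smooth_dif[of U "\<lambda>q. X q $ j" p k] X p unfolding smooth_vf_on_def by blast
    define c where "c = lam - mu p"
    have c: "c \<noteq> 0" "mu p = lam - c" using assms(7) p by (auto simp: c_def)
    have lam0: "lam \<noteq> 0" using assms(1) by simp
    have dg: "partial k (g m l) p = (if m = 0 \<and> l = 0 then 2 * partial k mu p / c^3 else 0)" for k m l
    proof (cases "m = 0 \<and> l = 0")
      case True
      then have "g m l = (\<lambda>q. 1 / (lam - mu q)^2)" by (simp add: gdef)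
      then show ?thesis using True partial_inv_sq[OF mud, of lam] c(1) by (simp add: c_def)
    next
      case False
      then have "g m l = (\<lambda>q. if m \<noteq> l then 0 else lam)" by (auto simp: gdef)
      then show ?thesis using False partial_const[of k "if m \<noteq> l then 0 else lam" p] by auto
    qed
    have mm: "metric_matrix g p = (\<chi> i j. if i = j then (if i = 0 then 1 / c^2 else lam) else 0)"
      by (simp add: metric_matrix_def gdef c_def vec_eq_iff)
    have minv: "matrix_inv (metric_matrix g p) = (\<chi> i j. if i = j then 1 / (if i = 0 then 1 / c^2 else lam) else 0)"
      unfolding mm by (rule diag_inv) (use c lam0 in auto)
    have CH: "christoffel g i k l p = 1/2 * (1 / (if i = 0 then 1 / c^2 else lam)) *
        ((if i = 0 \<and> l = 0 then 2 * partial k mu p / c^3 else 0)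
       + (if i = 0 \<and> k = 0 then 2 * partial l mu p / c^3 else 0)
       - (if k = 0 \<and> l = 0 then 2 * partial i mu p / c^3 else 0))" for i k l
      unfolding christoffel_def minv by (simp add: sum_if_left dg)
    have pAY: "partial k (\<lambda>q. applyT A q (Y q) $ i) p =
       (if i = 0 then partial k mu p else 0) * Y p $ i + (if i = 0 then mu p else lam) * partial k (\<lambda>q. Y q $ i) p" for k i
    proof (cases "i = 0")
      case True
      then show ?thesis using partial_mult[OF mud[of k] Yd[of k i]] by (simp add: appA)
    next
      case False
      have cd: "(\<lambda>s. (\<lambda>q. lam) (p + s *\<^sub>R axis k 1)) differentiable (at 0)" by simp
      show ?thesis using False partial_mult[OF cd Yd[of k i]] partial_const[of k lam p] by (simp add: appA)
    qed
    have pAX: "partial k (\<lambda>q. applyT A q (X q) $ i) p =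
       (if i = 0 then partial k mu p else 0) * X p $ i + (if i = 0 then mu p else lam) * partial k (\<lambda>q. X q $ i) p" for k i
    proof (cases "i = 0")
      case True
      then show ?thesis using partial_mult[OF mud[of k] Xd[of k i]] by (simp add: appA)
    next
      case False
      have cd: "(\<lambda>s. (\<lambda>q. lam) (p + s *\<^sub>R axis k 1)) differentiable (at 0)" by simp
      show ?thesis using False partial_mult[OF cd Xd[of k i]] partial_const[of k lam p] by (simp add: appA)
    qed
    have comp: "covD_tensor g A X Y p $ i =
       (\<Sum>k\<in>UNIV. X p $ k * (if i = 0 then partial k mu p else 0) * Y p $ i) +
       (\<Sum>k\<in>UNIV. \<Sum>l\<in>UNIV. christoffel g i k l p * X p $ k * Y p $ l *
          ((if l = 0 then mu p else lam) - (if i = 0 then mu p else lam)))" for i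
      unfolding covD_tensor_def covD_def dirD_def vector_minus_component vec_lambda_beta pAY
      by (simp add: appA sum3 algebra_simps)
    have comp2: "covD_tensor g A Y X p $ i =
       (\<Sum>k\<in>UNIV. Y p $ k * (if i = 0 then partial k mu p else 0) * X p $ i) +
       (\<Sum>k\<in>UNIV. \<Sum>l\<in>UNIV. christoffel g i k l p * Y p $ k * X p $ l *
          ((if l = 0 then mu p else lam) - (if i = 0 then mu p else lam)))" for i
      unfolding covD_tensor_def covD_def dirD_def vector_minus_component vec_lambda_beta pAX
      by (simp add: appA sum3 algebra_simps)
    show ?thesis
      unfolding vec_eq_iff
    proof
      fix i :: 3
      show "covD_tensor g A X Y p $ i = covD_tensor g A Y X p $ i"
        unfolding comp comp2 CH using exh3[of i] c(1) lam0
        by (elim disjE; simp add: sum3 c(2) field_simps; simp add: eval_nat_numeral algebra_simps)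
    qed
  qed
  show ?thesis unfolding codazzi_tensor_def using sym cod by blast
qed
end
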